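(* Let $(P,\leqslant)$ be a finite partially ordered set. Then $P$ admits a selection map if and only if the associated Kolmogorov space of $P$ has the universal fixed point property.
   Context: The associated Kolmogorov space of a finite poset $P$ is the set $P$ with the topology whose open sets are the down-sets, i.e. subsets $U$ such that $x\leqslant x'$ and $x'\in U$ imply $x\in U$. Let $M(P)$ be the set of order-preserving maps $P\to P$, partially ordered pointwise ($f\leqslant g$ iff $f(x)\leqslant g(x)$ for all $x$). A selection map for $P$ is an order-preserving map $\Phi\colon M(P)\to P$ such that $f(\Phi(f))=\Phi(f)$ for all $f\in M(P)$. A topological space $X$ has the universal fixed point property if for every topological space $T$ and every continuous map $f\colon T\times X\to X$ there exists a continuous map $p\colon T\to X$ with $f(t,p(t))=p(t)$ for all $t\in T$. *)

theory Defs
  imports "HOL-Analysis.Analysis"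
begin

text \<open>The finite poset P is modelled as a type of class finite and order (P = UNIV).\<close>

definition is_downset :: "'a::order set \<Rightarrow> bool" where
  "is_downset U \<longleftrightarrow> (\<forall>x x'. x \<le> x' \<longrightarrow> x' \<in> U \<longrightarrow> x \<in> U)"

lemma istopology_downsets: "istopology (is_downset :: 'a::order set \<Rightarrow> bool)"
  unfolding istopology_def is_downset_def by blast

definition kolmogorov_space :: "'a::order topology" where
  "kolmogorov_space = topology is_downset"

lemma openin_kolmogorov_space: "openin kolmogorov_space U \<longleftrightarrow> is_downset U"
  unfolding kolmogorov_space_def by (simp add: topology_inverse'[OF istopology_downsets])

definition selection_map :: "(('a::order \<Rightarrow> 'a) \<Rightarrow> 'a) \<Rightarrow> bool" where
  "selection_map \<Phi> \<longleftrightarrow>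
     (\<forall>f g. mono f \<longrightarrow> mono g \<longrightarrow> (\<forall>x. f x \<le> g x) \<longrightarrow> \<Phi> f \<le> \<Phi> g) \<and>
     (\<forall>f. mono f \<longrightarrow> f (\<Phi> f) = \<Phi> f)"

text \<open>Universal fixed point property, with test spaces T ranging over topologies on type 't.\<close>
definition ufpp :: "'a topology \<Rightarrow> 't itself \<Rightarrow> bool" where
  "ufpp X _ \<longleftrightarrow>
     (\<forall>(T::'t topology) f. continuous_map (prod_topology T X) X f \<longrightarrow>
        (\<exists>p. continuous_map T X p \<and> (\<forall>t\<in>topspace T. f (t, p t) = p t)))"

end

theory Submission
  imports Defs
begin

lemma topspace_K: "topspace (kolmogorov_space :: 'a::order topology) = UNIV"
proof -
  have "openin (kolmogorov_space :: 'a topology) UNIV"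
    by (simp add: openin_kolmogorov_space is_downset_def)
  then show ?thesis using openin_subset by blast
qed

lemma downset_le: "is_downset {z::'a::order. z \<le> a}"
  unfolding is_downset_def using order_trans by blast

lemma key:
  fixes f :: "'t \<times> 'a::order \<Rightarrow> 'a"
  assumes c: "continuous_map (prod_topology T kolmogorov_space) kolmogorov_space f"
    and t: "t \<in> topspace T" and xy: "x \<le> y"
  shows "\<exists>W. openin T W \<and> t \<in> W \<and> (\<forall>t'\<in>W. f (t', x) \<le> f (t, y))"
proof -
  let ?S = "{z \<in> topspace (prod_topology T kolmogorov_space). f z \<in> {w. w \<le> f (t, y)}}"
  have "openin (prod_topology T kolmogorov_space) ?S"
    using c downset_le unfolding continuous_map_def openin_kolmogorov_space by blast
  moreover have "(t, y) \<in> ?S" using t by (simp add: topspace_K)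
  ultimately obtain U V where UV: "openin T U" "openin kolmogorov_space V" "t \<in> U" "y \<in> V"
     "U \<times> V \<subseteq> ?S"
    unfolding openin_prod_topology_alt by meson
  have "x \<in> V" using UV(2,4) xy unfolding openin_kolmogorov_space is_downset_def by blast
  then show ?thesis using UV by (intro exI[of _ U]) auto
qed

lemma forward:
  fixes \<Phi> :: "('a::{finite,order} \<Rightarrow> 'a) \<Rightarrow> 'a"
  assumes s: "selection_map \<Phi>"
  shows "ufpp (kolmogorov_space :: 'a topology) TYPE('t)"
  unfolding ufpp_def
proof (intro allI impI)
  fix T :: "'t topology" and f :: "'t \<times> 'a \<Rightarrow> 'a"
  assume c: "continuous_map (prod_topology T kolmogorov_space) kolmogorov_space f"
  define p where "p t = \<Phi> (\<lambda>x. f (t, x))" for t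
  have mono: "mono (\<lambda>x. f (t, x))" if "t \<in> topspace T" for t
    using key[OF c that] by (auto intro!: monoI)
  have s1: "\<And>f g. mono f \<Longrightarrow> mono g \<Longrightarrow> (\<forall>x. f x \<le> g x) \<Longrightarrow> \<Phi> f \<le> \<Phi> g"
    and s2: "\<And>f. mono f \<Longrightarrow> f (\<Phi> f) = \<Phi> f"
    using s unfolding selection_map_def by blast+
  have fixp: "\<forall>t\<in>topspace T. f (t, p t) = p t"
  proof
    fix t assume "t \<in> topspace T"
    from s2[OF mono[OF this]] show "f (t, p t) = p t" by (simp add: p_def)
  qed
  have cont: "continuous_map T kolmogorov_space p"
    unfolding continuous_map_def
  proof (intro conjI allI impI)
    show "p \<in> topspace T \<rightarrow> topspace kolmogorov_space" by (simp add: topspace_K)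
  next
    fix U :: "'a set" assume "openin kolmogorov_space U"
    then have U: "is_downset U" by (simp add: openin_kolmogorov_space)
    show "openin T {t \<in> topspace T. p t \<in> U}"
    proof (rule openin_subopen[THEN iffD2], intro ballI)
      fix t assume "t \<in> {t \<in> topspace T. p t \<in> U}"
      then have t: "t \<in> topspace T" and pt: "p t \<in> U" by auto
      have "\<forall>x. \<exists>W. openin T W \<and> t \<in> W \<and> (\<forall>t'\<in>W. f (t', x) \<le> f (t, x))"
        using key[OF c t] by blast
      then obtain W where W: "\<And>x. openin T (W x) \<and> t \<in> W x \<and> (\<forall>t'\<in>W x. f (t', x) \<le> f (t, x))"
        by metis
      define W0 where "W0 = topspace T \<inter> \<Inter>(range W)"
      have "openin T W0" unfolding W0_def
        using W by (intro openin_Int openin_topspace openin_Inter) auto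
      moreover have "t \<in> W0" using W t by (auto simp: W0_def)
      moreover have "W0 \<subseteq> {t \<in> topspace T. p t \<in> U}"
      proof
        fix t' assume t': "t' \<in> W0"
        then have "t' \<in> topspace T" by (simp add: W0_def)
        moreover have "\<forall>x. f (t', x) \<le> f (t, x)" using t' W by (auto simp: W0_def)
        ultimately have "p t' \<le> p t"
          unfolding p_def by (intro s1 mono t) auto
        then show "t' \<in> {t \<in> topspace T. p t \<in> U}"
          using U pt \<open>t' \<in> topspace T\<close> unfolding is_downset_def by blast
      qed
      ultimately show "\<exists>T'. openin T T' \<and> t \<in> T' \<and> T' \<subseteq> {t \<in> topspace T. p t \<in> U}"
        by blast
    qed
  qed
  show "\<exists>p. continuous_map T kolmogorov_space p \<and> (\<forall>t\<in>topspace T. f (t, p t) = p t)"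
    using cont fixp by blast
qed

definition Mopen :: "(('a::order \<Rightarrow> 'a)) set \<Rightarrow> bool" where
  "Mopen U \<longleftrightarrow> U \<subseteq> {g. mono g} \<and>
     (\<forall>g g'. g \<in> U \<longrightarrow> mono g' \<longrightarrow> (\<forall>x. g' x \<le> g x) \<longrightarrow> g' \<in> U)"

lemma istopology_Mopen: "istopology Mopen"
  unfolding istopology_def Mopen_def by blast

lemma openin_M: "openin (topology Mopen) U \<longleftrightarrow> Mopen U"
  by (simp add: istopology_Mopen)

lemma topspace_M: "topspace (topology Mopen :: ('a::order \<Rightarrow> 'a) topology) = {g. mono g}"
proof -
  have "Mopen {g::'a\<Rightarrow>'a. mono g}" unfolding Mopen_def by blast
  then have "openin (topology Mopen) {g::'a\<Rightarrow>'a. mono g}" by (simp add: openin_M)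
  then have "{g::'a\<Rightarrow>'a. mono g} \<subseteq> topspace (topology Mopen)" using openin_subset by blast
  moreover have "topspace (topology Mopen :: ('a \<Rightarrow> 'a) topology) \<subseteq> {g. mono g}"
    unfolding topspace_def by (auto simp: openin_M Mopen_def)
  ultimately show ?thesis by blast
qed

lemma backward:
  assumes u: "ufpp (kolmogorov_space :: ('a::{finite,order}) topology) TYPE('a \<Rightarrow> 'a)"
  shows "\<exists>\<Phi>. selection_map (\<Phi> :: ('a \<Rightarrow> 'a) \<Rightarrow> 'a)"
proof -
  let ?T = "topology Mopen :: ('a \<Rightarrow> 'a) topology"
  let ?f = "\<lambda>(g::'a\<Rightarrow>'a, x::'a). g x"
  have c: "continuous_map (prod_topology ?T kolmogorov_space) kolmogorov_space ?f"
    unfolding continuous_map_def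
  proof (intro conjI allI impI)
    show "?f \<in> topspace (prod_topology ?T kolmogorov_space) \<rightarrow> topspace kolmogorov_space"
      by (simp add: topspace_K)
  next
    fix U :: "'a set" assume "openin kolmogorov_space U"
    then have U: "is_downset U" by (simp add: openin_kolmogorov_space)
    show "openin (prod_topology ?T kolmogorov_space)
           {z \<in> topspace (prod_topology ?T kolmogorov_space). ?f z \<in> U}"
      unfolding openin_prod_topology_alt
    proof (intro allI impI)
      fix g x assume gx: "(g, x) \<in> {z \<in> topspace (prod_topology ?T kolmogorov_space). ?f z \<in> U}"
      then have g: "mono g" and gxU: "g x \<in> U" by (auto simp: topspace_M)
      let ?U = "{g'. mono g' \<and> (\<forall>y. g' y \<le> g y)}"
      let ?V = "{y. y \<le> x}"
      have "Mopen ?U" unfolding Mopen_def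
      proof (intro conjI allI impI)
        show "?U \<subseteq> {g. mono g}" by blast
      next
        fix g1 g2 :: "'a \<Rightarrow> 'a"
        assume a: "g1 \<in> ?U" "mono g2" "\<forall>x. g2 x \<le> g1 x"
        have "g2 y \<le> g y" for y
          using order_trans[of "g2 y" "g1 y" "g y"] a by simp
        then show "g2 \<in> ?U" using a(2) by simp
      qed
      then have "openin ?T ?U" by (simp add: openin_M)
      moreover have "openin kolmogorov_space ?V" by (simp add: openin_kolmogorov_space downset_le)
      moreover have "?U \<times> ?V \<subseteq> {z \<in> topspace (prod_topology ?T kolmogorov_space). ?f z \<in> U}"
      proof
        fix z assume "z \<in> ?U \<times> ?V"
        then obtain g' x' where z: "z = (g', x')" "mono g'" "\<forall>y. g' y \<le> g y" "x' \<le> x" by auto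
        then have "g' x' \<le> g x" using order_trans[OF monoD[OF z(2) z(4)] spec[OF z(3), of x]] by simp
        then have "g' x' \<in> U" using U gxU unfolding is_downset_def by blast
        then show "z \<in> {z \<in> topspace (prod_topology ?T kolmogorov_space). ?f z \<in> U}"
          using z by (simp add: topspace_M topspace_K)
      qed
      ultimately show "\<exists>U' V. openin ?T U' \<and> openin kolmogorov_space V \<and> g \<in> U' \<and> x \<in> V \<and>
          U' \<times> V \<subseteq> {z \<in> topspace (prod_topology ?T kolmogorov_space). ?f z \<in> U}"
        using g by (intro exI[of _ ?U] exI[of _ ?V]) auto
    qed
  qed
  obtain p where p: "continuous_map ?T kolmogorov_space p" "\<forall>t\<in>topspace ?T. ?f (t, p t) = p t"
    using u c unfolding ufpp_def by blast
  have "selection_map p"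
    unfolding selection_map_def
  proof (intro conjI allI impI)
    fix f g :: "'a \<Rightarrow> 'a" assume f: "mono f" and g: "mono g" and fg: "\<forall>x. f x \<le> g x"
    have "openin ?T {h \<in> topspace ?T. p h \<in> {z. z \<le> p g}}"
      using p(1) downset_le unfolding continuous_map_def openin_kolmogorov_space by blast
    then have "Mopen {h \<in> topspace ?T. p h \<in> {z. z \<le> p g}}" by (simp add: openin_M)
    moreover have "g \<in> {h \<in> topspace ?T. p h \<in> {z. z \<le> p g}}" using g by (simp add: topspace_M)
    ultimately have "f \<in> {h \<in> topspace ?T. p h \<in> {z. z \<le> p g}}"
      using f fg unfolding Mopen_def by blast
    then show "p f \<le> p g" by simp
  next
    fix f :: "'a \<Rightarrow> 'a" assume "mono f"
    then show "f (p f) = p f" using p(2) by (simp add: topspace_M)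
  qed
  then show ?thesis by blast
qed

theorem proposition8p1:
  shows "(\<exists>\<Phi>. selection_map (\<Phi> :: ('a::{finite,order} \<Rightarrow> 'a) \<Rightarrow> 'a)) \<longleftrightarrow>
         (ufpp (kolmogorov_space :: 'a topology) TYPE('t) \<and>
          ufpp (kolmogorov_space :: 'a topology) TYPE('a \<Rightarrow> 'a))"
proof
  assume "\<exists>\<Phi>. selection_map (\<Phi> :: ('a \<Rightarrow> 'a) \<Rightarrow> 'a)"
  then obtain \<Phi> :: "('a \<Rightarrow> 'a) \<Rightarrow> 'a" where "selection_map \<Phi>" ..
  then show "ufpp (kolmogorov_space :: 'a topology) TYPE('t) \<and>
          ufpp (kolmogorov_space :: 'a topology) TYPE('a \<Rightarrow> 'a)"
    by (intro conjI forward)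
next
  assume "ufpp (kolmogorov_space :: 'a topology) TYPE('t) \<and>
          ufpp (kolmogorov_space :: 'a topology) TYPE('a \<Rightarrow> 'a)"
  then show "\<exists>\<Phi>. selection_map (\<Phi> :: ('a \<Rightarrow> 'a) \<Rightarrow> 'a)"
    by (intro backward) (rule conjunct2)
qed

end
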